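(* Let $R\ge1$, $\mathbf{x}$ a vector of pairwise distinct reals, $\mathbf{c}\in\mathbb{R}^R$, $B=B(\mathbf{x},\mathbf{c})$, and let $\mathbf{u}=\mathbf{v}+i\mathbf{w}$ (with $\mathbf{v},\mathbf{w}\in\mathbb{R}^R$) be an eigenvector of $B$ for the eigenvalue $i\mu$, $\mu\in\mathbb{R}$. Then for every $1\le n\le R$, $$\mu^2v_n^2=\sum_{m=1}^R b_{n,m}^2w_m^2+2c_n^2\sum_{\substack{1\le m\le R\\ m\ne n}} a_{n,m}\,w_m\,(\mu v_m-b_{m,n}w_n).$$ Moreover, if $\mu\ne0$ then $\Vert\mathbf{v}\Vert=\Vert\mathbf{w}\Vert$; if $\mu=0$ then $\det B=0$ and the kernel of $B$ contains a nonzero real vector.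
   Context: $a_{m,m}=0$ and $a_{m,n}=\frac{1}{x_m-x_n}$ for $m\ne n$; $B(\mathbf{x},\mathbf{c})$ is the $R\times R$ matrix with entries $b_{m,n}=c_mc_na_{m,n}$. $\Vert\cdot\Vert$ is the Euclidean norm. *)

theory Defs
  imports "HOL-Analysis.Analysis"
begin

definition Amat :: "real ^ 'n \<Rightarrow> real ^ 'n ^ 'n" where
  "Amat x = (\<chi> m n. if m = n then 0 else 1 / (x $ m - x $ n))"

definition Bmat :: "real ^ 'n \<Rightarrow> real ^ 'n \<Rightarrow> real ^ 'n ^ 'n" where
  "Bmat x c = (\<chi> m n. c $ m * c $ n * Amat x $ m $ n)"

definition cmat :: "real ^ 'n ^ 'm \<Rightarrow> complex ^ 'n ^ 'm" where
  "cmat M = (\<chi> i j. complex_of_real (M $ i $ j))"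

end

theory Submission
  imports Defs
begin

lemma eig_parts:
  fixes x c v w :: "real ^ 'n" and u :: "complex ^ 'n" and \<mu> :: real
  assumes eig: "cmat (Bmat x c) *v u = (\<i> * complex_of_real \<mu>) *s u"
    and u_vw: "\<And>i. u $ i = complex_of_real (v $ i) + \<i> * complex_of_real (w $ i)"
  shows "(\<Sum>j\<in>UNIV. Bmat x c $ i $ j * w $ j) = \<mu> * v $ i"
    and "(\<Sum>j\<in>UNIV. Bmat x c $ i $ j * v $ j) = - \<mu> * w $ i"
proof -
  have e: "(\<Sum>j\<in>UNIV. complex_of_real (Bmat x c $ i $ j) * u $ j) = (\<i> * complex_of_real \<mu>) * u $ i"
    using arg_cong[OF eig, of "\<lambda>y. y $ i"] by (simp add: matrix_vector_mult_def cmat_def)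
  show "(\<Sum>j\<in>UNIV. Bmat x c $ i $ j * w $ j) = \<mu> * v $ i"
    using arg_cong[OF e, of Im] by (simp add: u_vw Im_sum)
  show "(\<Sum>j\<in>UNIV. Bmat x c $ i $ j * v $ j) = - \<mu> * w $ i"
    using arg_cong[OF e, of Re] by (simp add: u_vw Re_sum)
qed

lemma B_anti: "Bmat x c $ i $ j = - Bmat x c $ j $ i"
  by (simp add: Bmat_def Amat_def divide_simps) (auto simp: field_simps)

lemma B_diag: "Bmat x c $ i $ i = 0"
  by (simp add: Bmat_def Amat_def)

lemma aux_id: "(A::real) \<noteq> 0 \<Longrightarrow> C \<noteq> 0 \<Longrightarrow> A + C \<noteq> 0 \<Longrightarrow> 1 / A * (1 / (A + C)) = 1 / A * (1 / C) + 1 / (A + C) * (1 / - C)"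
proof -
  assume h: "A \<noteq> 0" "C \<noteq> 0" "A + C \<noteq> 0"
  have "1 / A * (1 / C) + 1 / (A + C) * (1 / - C) = ((A + C) - A) / (A * C * (A + C))"
    using h by (simp add: divide_simps)
  also have "\<dots> = 1 / A * (1 / (A + C))" using h by simp
  finally show ?thesis by simp
qed

lemma aux_id2: "(p::real) - q \<noteq> 0 \<Longrightarrow> p - r \<noteq> 0 \<Longrightarrow> q - r \<noteq> 0 \<Longrightarrow> 1 / (p - q) * (1 / (p - r)) =
          1 / (p - q) * (1 / (q - r)) + 1 / (p - r) * (1 / (r - q))"
  using aux_id[of "p - q" "q - r"] by simp

theorem lemma6:
  fixes x c v w :: "real ^ 'n" and u :: "complex ^ 'n" and \<mu> :: real
  assumes distinct: "inj (\<lambda>i. x $ i)"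
    and u_nz: "u \<noteq> 0"
    and eig: "cmat (Bmat x c) *v u = (\<i> * complex_of_real \<mu>) *s u"
    and u_vw: "\<And>i. u $ i = complex_of_real (v $ i) + \<i> * complex_of_real (w $ i)"
  shows "(\<forall>n. \<mu>\<^sup>2 * (v $ n)\<^sup>2 =
              (\<Sum>m\<in>UNIV. (Bmat x c $ n $ m)\<^sup>2 * (w $ m)\<^sup>2)
              + 2 * (c $ n)\<^sup>2 * (\<Sum>m\<in>UNIV - {n}. Amat x $ n $ m * w $ m *
                   (\<mu> * v $ m - Bmat x c $ m $ n * w $ n)))
         \<and> (\<mu> \<noteq> 0 \<longrightarrow> norm v = norm w)
         \<and> (\<mu> = 0 \<longrightarrow> det (Bmat x c) = 0 \<and> (\<exists>z :: real ^ 'n. z \<noteq> 0 \<and> Bmat x c *v z = 0))"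
proof (intro conjI allI impI)
  let ?B = "Bmat x c"
  let ?A = "Amat x"
  have Bw: "\<And>i. (\<Sum>j\<in>UNIV. ?B $ i $ j * w $ j) = \<mu> * v $ i"
    using eig_parts(1)[OF eig u_vw] by blast
  have Bv: "\<And>i. (\<Sum>j\<in>UNIV. ?B $ i $ j * v $ j) = - \<mu> * w $ i"
    using eig_parts(2)[OF eig u_vw] by blast
  have xne: "\<And>i j. i \<noteq> j \<Longrightarrow> x $ i \<noteq> x $ j" using distinct by (auto dest: injD)
  fix n
  define P where "P m k = ?B $ n $ m * ?B $ n $ k * w $ m * w $ k" for m k
  define D where "D m k = (if m = k then (?B $ n $ m)\<^sup>2 * (w $ m)\<^sup>2 else 0)" for m k
  define Q where "Q m k = (if m \<noteq> n \<and> k \<noteq> n then (c $ n)\<^sup>2 * ?A $ n $ m * w $ m * (?B $ m $ k * w $ k) else 0)" for m k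
  have pt: "P m k = D m k + Q m k + Q k m" for m k
  proof (cases "m = k")
    case True then show ?thesis by (simp add: P_def D_def Q_def B_diag power2_eq_square)
  next
    case mk: False
    show ?thesis
    proof (cases "m = n \<or> k = n")
      case True then show ?thesis using mk by (auto simp: P_def D_def Q_def B_diag)
    next
      case False
      then have d1: "x $ n - x $ m \<noteq> 0" and d2: "x $ n - x $ k \<noteq> 0" and d3: "x $ m - x $ k \<noteq> 0"
        using xne mk by auto
      have id: "1 / (x $ n - x $ m) * (1 / (x $ n - x $ k)) =
          1 / (x $ n - x $ m) * (1 / (x $ m - x $ k)) + 1 / (x $ n - x $ k) * (1 / (x $ k - x $ m))"
        using aux_id2[OF d1 d2 d3] .
      have "P m k = (c $ n)\<^sup>2 * c $ m * c $ k * w $ m * w $ k * (1 / (x $ n - x $ m) * (1 / (x $ n - x $ k)))"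
        using False mk by (simp add: P_def Bmat_def Amat_def power2_eq_square)
      also have "\<dots> = (c $ n)\<^sup>2 * c $ m * c $ k * w $ m * w $ k * (1 / (x $ n - x $ m) * (1 / (x $ m - x $ k)) + 1 / (x $ n - x $ k) * (1 / (x $ k - x $ m)))"
        by (simp only: id)
      also have "\<dots> = D m k + Q m k + Q k m"
        using False mk by (simp add: D_def Q_def Bmat_def Amat_def algebra_simps power2_eq_square)
      finally show ?thesis .
    qed
  qed
  have "\<mu>\<^sup>2 * (v $ n)\<^sup>2 = (\<Sum>m\<in>UNIV. ?B $ n $ m * w $ m)\<^sup>2"
    by (simp add: Bw power_mult_distrib)
  also have "\<dots> = (\<Sum>m\<in>UNIV. \<Sum>k\<in>UNIV. P m k)"
    by (simp add: power2_eq_square sum_product P_def algebra_simps)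
  also have "\<dots> = (\<Sum>m\<in>UNIV. \<Sum>k\<in>UNIV. D m k) + (\<Sum>m\<in>UNIV. \<Sum>k\<in>UNIV. Q m k) + (\<Sum>m\<in>UNIV. \<Sum>k\<in>UNIV. Q k m)"
    by (simp add: pt sum.distrib)
  also have "(\<Sum>m\<in>UNIV. \<Sum>k\<in>UNIV. Q k m) = (\<Sum>m\<in>UNIV. \<Sum>k\<in>UNIV. Q m k)"
    by (rule sum.swap)
  also have "(\<Sum>m\<in>UNIV. \<Sum>k\<in>UNIV. D m k) = (\<Sum>m\<in>UNIV. (?B $ n $ m)\<^sup>2 * (w $ m)\<^sup>2)"
    by (simp add: D_def)
  also have "(\<Sum>m\<in>UNIV. \<Sum>k\<in>UNIV. Q m k) = (c $ n)\<^sup>2 * (\<Sum>m\<in>UNIV - {n}. ?A $ n $ m * w $ m *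
                   (\<mu> * v $ m - ?B $ m $ n * w $ n))"
  proof -
    have "(\<Sum>m\<in>UNIV. \<Sum>k\<in>UNIV. Q m k) = (\<Sum>m\<in>UNIV - {n}. \<Sum>k\<in>UNIV - {n}. Q m k)"
    proof -
      have inner: "(\<Sum>k\<in>UNIV. Q m k) = (if m = n then 0 else \<Sum>k\<in>UNIV - {n}. Q m k)" for m
      proof (cases "m = n")
        case True then show ?thesis by (simp add: Q_def)
      next
        case False
        then show ?thesis by (simp add: sum.remove[of UNIV n] Q_def)
      qed
      have "(\<Sum>m\<in>UNIV. \<Sum>k\<in>UNIV. Q m k) = (\<Sum>m\<in>UNIV. (if m = n then 0 else \<Sum>k\<in>UNIV - {n}. Q m k))"
        by (simp only: inner)
      also have "\<dots> = (\<Sum>m\<in>UNIV - {n}. \<Sum>k\<in>UNIV - {n}. Q m k)"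
        by (simp add: sum.remove[of UNIV n])
      finally show ?thesis .
    qed
    also have "\<dots> = (\<Sum>m\<in>UNIV - {n}. (c $ n)\<^sup>2 * ?A $ n $ m * w $ m * (\<Sum>k\<in>UNIV - {n}. ?B $ m $ k * w $ k))"
      by (simp add: Q_def sum_distrib_left)
    also have "\<dots> = (\<Sum>m\<in>UNIV - {n}. (c $ n)\<^sup>2 * (?A $ n $ m * w $ m * (\<mu> * v $ m - ?B $ m $ n * w $ n)))"
    proof (rule sum.cong[OF refl])
      fix m
      have "(\<Sum>k\<in>UNIV. ?B $ m $ k * w $ k) = ?B $ m $ n * w $ n + (\<Sum>k\<in>UNIV - {n}. ?B $ m $ k * w $ k)"
        by (simp add: sum.remove[of UNIV n])
      then have "(\<Sum>k\<in>UNIV - {n}. ?B $ m $ k * w $ k) = \<mu> * v $ m - ?B $ m $ n * w $ n"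
        using Bw[of m] by linarith
      then show "(c $ n)\<^sup>2 * ?A $ n $ m * w $ m * (\<Sum>k\<in>UNIV - {n}. ?B $ m $ k * w $ k) =
        (c $ n)\<^sup>2 * (?A $ n $ m * w $ m * (\<mu> * v $ m - ?B $ m $ n * w $ n))" by simp
    qed
    also have "\<dots> = (c $ n)\<^sup>2 * (\<Sum>m\<in>UNIV - {n}. ?A $ n $ m * w $ m * (\<mu> * v $ m - ?B $ m $ n * w $ n))"
      by (simp add: sum_distrib_left)
    finally show ?thesis .
  qed
  finally show "\<mu>\<^sup>2 * (v $ n)\<^sup>2 =
              (\<Sum>m\<in>UNIV. (?B $ n $ m)\<^sup>2 * (w $ m)\<^sup>2)
              + 2 * (c $ n)\<^sup>2 * (\<Sum>m\<in>UNIV - {n}. ?A $ n $ m * w $ m *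
                   (\<mu> * v $ m - ?B $ m $ n * w $ n))" by simp
next
  let ?B = "Bmat x c"
  have Bw: "\<And>i. (\<Sum>j\<in>UNIV. ?B $ i $ j * w $ j) = \<mu> * v $ i"
    using eig_parts(1)[OF eig u_vw] by blast
  have Bv: "\<And>i. (\<Sum>j\<in>UNIV. ?B $ i $ j * v $ j) = - \<mu> * w $ i"
    using eig_parts(2)[OF eig u_vw] by blast
  assume mu: "\<mu> \<noteq> 0"
  have "\<mu> * (v \<bullet> v) = (\<Sum>i\<in>UNIV. v $ i * (\<Sum>j\<in>UNIV. ?B $ i $ j * w $ j))"
    by (simp only: Bw) (simp add: inner_vec_def sum_distrib_left algebra_simps)
  also have "\<dots> = (\<Sum>i\<in>UNIV. \<Sum>j\<in>UNIV. v $ i * ?B $ i $ j * w $ j)"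
    by (simp add: sum_distrib_left algebra_simps)
  also have "\<dots> = (\<Sum>j\<in>UNIV. \<Sum>i\<in>UNIV. v $ i * ?B $ i $ j * w $ j)"
    by (rule sum.swap)
  also have "\<dots> = - (\<Sum>j\<in>UNIV. w $ j * (\<Sum>i\<in>UNIV. ?B $ j $ i * v $ i))"
    by (subst B_anti) (simp add: sum_distrib_left algebra_simps sum_negf)
  also have "\<dots> = \<mu> * (w \<bullet> w)"
    by (simp only: Bv) (simp add: inner_vec_def sum_distrib_left algebra_simps sum_negf)
  finally have "v \<bullet> v = w \<bullet> w" using mu by simp
  then show "norm v = norm w" by (simp add: norm_eq_sqrt_inner)
next
  let ?B = "Bmat x c"
  assume mu: "\<mu> = 0"
  have Bw: "?B *v w = 0"
    using eig_parts(1)[OF eig u_vw] mu by (simp add: vec_eq_iff matrix_vector_mult_def)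
  have Bv: "?B *v v = 0"
    using eig_parts(2)[OF eig u_vw] mu by (simp add: vec_eq_iff matrix_vector_mult_def)
  have "v \<noteq> 0 \<or> w \<noteq> 0"
  proof (rule ccontr)
    assume "\<not> (v \<noteq> 0 \<or> w \<noteq> 0)"
    then have "u = 0" by (simp add: vec_eq_iff u_vw)
    with u_nz show False by simp
  qed
  then show ex: "\<exists>z :: real ^ 'n. z \<noteq> 0 \<and> ?B *v z = 0" using Bv Bw by blast
  show "det ?B = 0"
  proof (rule ccontr)
    assume "det ?B \<noteq> 0"
    then have "inj ((*v) ?B)" using invertible_det_nz inj_matrix_vector_mult by blast
    with ex show False by (metis injD matrix_vector_mult_0_right)
  qed
qed

end
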